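(* Let $\alpha=(\alpha_1,\dots,\alpha_n)\in\mathbb{R}^n$ with $\alpha_1,\dots,\alpha_n,1$ linearly independent over $\mathbb{Q}$, $\ell=n+1$, fix $m\in\mathbb{Z}^+$, and let $\beta_\ell$ be the last entry of $A_m(\alpha_1,\dots,\alpha_n,1)^\top$. Define the norm $G_m$ on $\mathbb{R}^\ell$ by $$G_m(x_1,\dots,x_\ell)=\max\Big(|x_1|,\dots,|x_\ell|,\tfrac{m}{|\beta_\ell|}\,|\alpha_1x_1+\cdots+\alpha_nx_n+x_\ell|\Big).$$ Let $\mu_1\le\cdots\le\mu_\ell$ be the successive minima of the lattice $\mathbb{Z}^\ell$ with respect to $G_m$. Then $\mu_\ell\ge m$.
   Context: For $r=(r_1,\dots,r_\ell)\in\mathbb{Z}^\ell$, $\xi(r)=r_1\alpha_1+\cdots+r_n\alpha_n+r_\ell$; $\|\cdot\|_\infty$ is the maximum absolute value of entries. $A_m$ (Minkowski's algorithm) is the nonsingular integral $\ell\times\ell$ matrix with rows $w_1,\dots,w_\ell$ chosen successively: $w_i$ is the vector $w\in\mathbb{Z}^\ell$ with $\|w\|_\infty\le m$, linearly independent of $w_1,\dots,w_{i-1}$, minimizing $|\xi(w)|$, normalized so that its first nonzero entry is positive; $\beta_i=\xi(w_i)$. For a norm $F$ on $\mathbb{R}^\ell$ and a full lattice $\Lambda$, the $j$-th successive minimum $\mu_j$ is the infimum of $\mu>0$ such that there are $j$ linearly independent $v\in\Lambda$ with $F(v)\le\mu$. *)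

theory Defs
  imports Complex_Main
begin

text \<open>Conventions: \<open>\<ell> = n+1\<close>; vectors in \<open>\<real>^\<ell>\<close> / \<open>\<int>^\<ell>\<close> are functions on \<open>nat\<close>
  whose coordinates \<open>0..n\<close> are the entries \<open>x_1..x_\<ell>\<close> (coordinate \<open>n\<close> is the last one);
  integer vectors are required to vanish at indices \<open>> n\<close>.
  \<open>\<alpha> i\<close> for \<open>i < n\<close> is \<open>\<alpha>_(i+1)\<close>.\<close>

definition Q_lin_indep_alpha :: "nat \<Rightarrow> (nat \<Rightarrow> real) \<Rightarrow> bool" where
  "Q_lin_indep_alpha n \<alpha> \<longleftrightarrow>
     (\<forall>q :: nat \<Rightarrow> rat. (\<Sum>i<n. of_rat (q i) * \<alpha> i) + of_rat (q n) = 0 \<longrightarrow> (\<forall>i\<le>n. q i = 0))"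

definition zvecs :: "nat \<Rightarrow> (nat \<Rightarrow> int) set" where
  "zvecs n = {r. \<forall>i>n. r i = 0}"

definition xi :: "nat \<Rightarrow> (nat \<Rightarrow> real) \<Rightarrow> (nat \<Rightarrow> real) \<Rightarrow> real" where
  "xi n \<alpha> x = (\<Sum>i<n. x i * \<alpha> i) + x n"

definition sup_norm :: "nat \<Rightarrow> (nat \<Rightarrow> real) \<Rightarrow> real" where
  "sup_norm n x = Max ((\<lambda>i. \<bar>x i\<bar>) ` {..n})"

definition rvec :: "(nat \<Rightarrow> int) \<Rightarrow> (nat \<Rightarrow> real)" where
  "rvec r = (\<lambda>i. real_of_int (r i))"

text \<open>Linear independence (over \<open>\<real>\<close>, equivalently over \<open>\<rat>\<close>) of a finite family of integer vectors in \<open>\<int>^\<ell>\<close>.\<close>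
definition lin_indep :: "nat \<Rightarrow> (nat \<Rightarrow> int) list \<Rightarrow> bool" where
  "lin_indep n vs \<longleftrightarrow>
     (\<forall>c :: nat \<Rightarrow> real. (\<forall>j\<le>n. (\<Sum>k<length vs. c k * real_of_int ((vs ! k) j)) = 0)
        \<longrightarrow> (\<forall>k<length vs. c k = 0))"

definition first_nonzero_pos :: "nat \<Rightarrow> (nat \<Rightarrow> int) \<Rightarrow> bool" where
  "first_nonzero_pos n w \<longleftrightarrow> (\<exists>j\<le>n. w j > 0 \<and> (\<forall>i<j. w i = 0))"

text \<open>One step of Minkowski's algorithm: \<open>w\<close> is an admissible next row after rows \<open>ws\<close>.\<close>
definition mink_next :: "nat \<Rightarrow> (nat \<Rightarrow> real) \<Rightarrow> nat \<Rightarrow> (nat \<Rightarrow> int) list \<Rightarrow> (nat \<Rightarrow> int) \<Rightarrow> bool" where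
  "mink_next n \<alpha> m ws w \<longleftrightarrow>
     w \<in> zvecs n \<and> sup_norm n (rvec w) \<le> real m \<and> lin_indep n (ws @ [w]) \<and> first_nonzero_pos n w \<and>
     (\<forall>v \<in> zvecs n. sup_norm n (rvec v) \<le> real m \<longrightarrow> lin_indep n (ws @ [v]) \<longrightarrow>
        \<bar>xi n \<alpha> (rvec w)\<bar> \<le> \<bar>xi n \<alpha> (rvec v)\<bar>)"

text \<open>The first \<open>i\<close> rows \<open>w_1,...,w_i\<close> of \<open>A_m\<close>.\<close>
fun mink_rows :: "nat \<Rightarrow> (nat \<Rightarrow> real) \<Rightarrow> nat \<Rightarrow> nat \<Rightarrow> (nat \<Rightarrow> int) list" where
  "mink_rows n \<alpha> m 0 = []"
| "mink_rows n \<alpha> m (Suc i) =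
     (let ws = mink_rows n \<alpha> m i in ws @ [SOME w. mink_next n \<alpha> m ws w])"

text \<open>\<open>\<beta>_i = \<xi>(w_i)\<close>, 1-based index \<open>i\<close>.\<close>
definition mink_beta :: "nat \<Rightarrow> (nat \<Rightarrow> real) \<Rightarrow> nat \<Rightarrow> nat \<Rightarrow> real" where
  "mink_beta n \<alpha> m i = xi n \<alpha> (rvec (mink_rows n \<alpha> m (n+1) ! (i - 1)))"

definition G_norm :: "nat \<Rightarrow> (nat \<Rightarrow> real) \<Rightarrow> nat \<Rightarrow> (nat \<Rightarrow> real) \<Rightarrow> real" where
  "G_norm n \<alpha> m x =
     max (sup_norm n x) (real m / \<bar>mink_beta n \<alpha> m (n+1)\<bar> * \<bar>xi n \<alpha> x\<bar>)"

definition succ_min :: "nat \<Rightarrow> ((nat \<Rightarrow> real) \<Rightarrow> real) \<Rightarrow> nat \<Rightarrow> real" where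
  "succ_min n F j = Inf {\<mu>. \<mu> > 0 \<and> (\<exists>vs. length vs = j \<and> set vs \<subseteq> zvecs n \<and> lin_indep n vs \<and>
                                     (\<forall>v\<in>set vs. F (rvec v) \<le> \<mu>))}"

end

theory Submission imports Defs "HOL-Library.Function_Algebras" begin

definition sc :: "real \<Rightarrow> (nat \<Rightarrow> real) \<Rightarrow> (nat \<Rightarrow> real)" where
  "sc c f = (\<lambda>i. c * f i)"

interpretation V: vector_space sc
  by unfold_locales (auto simp: sc_def fun_eq_iff algebra_simps)

lemma sum_fun_apply: "(\<Sum>x\<in>A. (f x :: nat \<Rightarrow> real)) i = (\<Sum>x\<in>A. f x i)"
  by (induction A rule: infinite_finite_induct) auto

definition P :: "nat \<Rightarrow> (nat \<Rightarrow> int) \<Rightarrow> (nat \<Rightarrow> real)" where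
  "P n v = (\<lambda>i. if i \<le> n then real_of_int (v i) else 0)"

lemma lin_indep_distinct:
  assumes "lin_indep n us" shows "distinct (map (P n) us)"
proof (rule ccontr)
  assume "\<not> distinct (map (P n) us)"
  then obtain i j where ij: "i < length us" "j < length us" "i \<noteq> j" "P n (us!i) = P n (us!j)"
    by (auto simp: distinct_conv_nth)
  define c where "c = (\<lambda>k. if k = i then 1 else if k = j then -1 else (0::real))"
  have "\<forall>jj\<le>n. (\<Sum>k<length us. c k * real_of_int ((us ! k) jj)) = 0"
  proof (intro allI impI)
    fix jj assume "jj \<le> n"
    have e: "real_of_int ((us!i) jj) = real_of_int ((us!j) jj)"
      using ij(4) \<open>jj \<le> n\<close> by (auto simp: P_def fun_eq_iff dest: spec[of _ jj])
    have "(\<Sum>k<length us. c k * real_of_int ((us ! k) jj)) =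
          (\<Sum>k\<in>{i,j}. c k * real_of_int ((us ! k) jj))"
      by (rule sum.mono_neutral_right) (use ij in \<open>auto simp: c_def\<close>)
    also have "\<dots> = 0" using ij(3) e by (simp add: c_def)
    finally show "(\<Sum>k<length us. c k * real_of_int ((us ! k) jj)) = 0" .
  qed
  with assms ij show False by (auto simp: lin_indep_def c_def dest!: spec[of _ c])
qed

lemma lin_indep_independent:
  assumes "lin_indep n us" shows "V.independent (P n ` set us)"
proof -
  have fin: "finite (P n ` set us)" by simp
  have dist: "distinct (map (P n) us)" using lin_indep_distinct[OF assms] .
  have inj: "inj_on (\<lambda>k. P n (us!k)) {..<length us}"
    using dist by (auto simp: inj_on_def distinct_conv_nth)
  have img: "(\<lambda>k. P n (us!k)) ` {..<length us} = P n ` set us"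
    by (auto simp: set_conv_nth image_iff)
  show ?thesis
  proof (rule ccontr)
    assume "\<not> V.independent (P n ` set us)"
    then obtain u where u: "\<exists>v\<in>P n ` set us. u v \<noteq> 0" "(\<Sum>v\<in>P n ` set us. sc (u v) v) = 0"
      using V.dependent_finite[OF fin] by blast
    define c where "c = (\<lambda>k. u (P n (us!k)))"
    have "\<forall>j\<le>n. (\<Sum>k<length us. c k * real_of_int ((us ! k) j)) = 0"
    proof (intro allI impI)
      fix j assume j: "j \<le> n"
      have "(\<Sum>k<length us. c k * real_of_int ((us ! k) j)) = (\<Sum>k<length us. c k * P n (us!k) j)"
        using j by (simp add: P_def)
      also have "\<dots> = (\<Sum>v\<in>P n ` set us. u v * v j)"
        unfolding img[symmetric] by (simp add: sum.reindex[OF inj] c_def)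
      also have "\<dots> = (\<Sum>v\<in>P n ` set us. sc (u v) v) j"
        by (simp add: sum_fun_apply sc_def)
      also have "\<dots> = 0" using u(2) by simp
      finally show "(\<Sum>k<length us. c k * real_of_int ((us ! k) j)) = 0" .
    qed
    hence "\<forall>k<length us. c k = 0" using assms by (auto simp: lin_indep_def)
    with u(1) show False by (auto simp: c_def set_conv_nth)
  qed
qed

lemma lin_indep_card:
  assumes "lin_indep n us" shows "card (P n ` set us) = length us"
  using lin_indep_distinct[OF assms] by (metis distinct_card length_map set_map)

lemma in_span_if_dep:
  assumes "lin_indep n ws" "\<not> lin_indep n (ws @ [u])"
  shows "P n u \<in> V.span (P n ` set ws)"
proof -
  obtain c where c: "\<forall>j\<le>n. (\<Sum>k<length (ws@[u]). c k * real_of_int (((ws@[u]) ! k) j)) = 0"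
    "\<exists>k<length (ws@[u]). c k \<noteq> 0"
    using assms(2) unfolding lin_indep_def by blast
  have c2: "\<forall>j\<le>n. (\<Sum>k<length ws. c k * real_of_int ((ws ! k) j)) + c (length ws) * real_of_int (u j) = 0"
    using c(1) by (simp add: nth_append)
  have cl: "c (length ws) \<noteq> 0"
  proof
    assume "c (length ws) = 0"
    with c2 have "\<forall>j\<le>n. (\<Sum>k<length ws. c k * real_of_int ((ws ! k) j)) = 0" by simp
    hence "\<forall>k<length ws. c k = 0" using assms(1) by (auto simp: lin_indep_def)
    with c(2) \<open>c (length ws) = 0\<close> show False by (auto simp: less_Suc_eq)
  qed
  define d where "d = (\<lambda>k. - c k / c (length ws))"
  have eq: "P n u = (\<Sum>k<length ws. sc (d k) (P n (ws!k)))"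
  proof
    fix j
    show "P n u j = (\<Sum>k<length ws. sc (d k) (P n (ws!k))) j"
    proof (cases "j \<le> n")
      case True
      have "(\<Sum>k<length ws. sc (d k) (P n (ws!k))) j = (\<Sum>k<length ws. d k * real_of_int ((ws ! k) j))"
        using True by (simp add: sum_fun_apply sc_def P_def)
      also have "\<dots> = - (\<Sum>k<length ws. c k * real_of_int ((ws ! k) j)) / c (length ws)"
        by (simp add: d_def sum_divide_distrib sum_negf)
      also have "\<dots> = real_of_int (u j)" using c2 True cl by (auto simp: field_simps add_eq_0_iff)
      finally show ?thesis using True by (simp add: P_def)
    qed (simp add: sum_fun_apply sc_def P_def)
  qed
  show ?thesis unfolding eq
    by (intro V.span_sum V.span_scale V.span_base) (auto simp: set_conv_nth)
qed

lemma exch: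
  assumes "lin_indep n ws" "lin_indep n us" "length ws < length us"
  shows "\<exists>u\<in>set us. lin_indep n (ws @ [u])"
proof (rule ccontr)
  assume "\<not> ?thesis"
  hence "P n ` set us \<subseteq> V.span (P n ` set ws)" using in_span_if_dep[OF assms(1)] by auto
  from V.independent_span_bound[OF _ lin_indep_independent[OF assms(2)] this]
  have "card (P n ` set us) \<le> card (P n ` set ws)" by simp
  also have "\<dots> \<le> length ws" by (metis card_image_le card_length List.finite_set order_trans)
  finally show False using lin_indep_card[OF assms(2)] assms(3) by simp
qed

lemma sup_norm_le: "sup_norm n x \<le> b \<longleftrightarrow> (\<forall>i\<le>n. \<bar>x i\<bar> \<le> b)"
  unfolding sup_norm_def by (subst Max_le_iff) auto

lemma sup_norm_ge: "i \<le> n \<Longrightarrow> \<bar>x i\<bar> \<le> sup_norm n x"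
  unfolding sup_norm_def by (rule Max_ge) auto

lemma lin_indep_snoc:
  "lin_indep n (ws@[v]) \<longleftrightarrow> (\<forall>c. (\<forall>j\<le>n. (\<Sum>k<length ws. c k * real_of_int ((ws!k) j)) + c (length ws) * real_of_int (v j) = 0)
       \<longrightarrow> (\<forall>k\<le>length ws. c k = 0))"
proof -
  have s: "(\<Sum>k<length (ws@[v]). c k * real_of_int (((ws@[v])!k) j)) =
     (\<Sum>k<length ws. c k * real_of_int ((ws!k) j)) + c (length ws) * real_of_int (v j)" for c j
    by (simp add: nth_append)
  show ?thesis unfolding lin_indep_def s by (simp add: less_Suc_eq_le)
qed

lemma lin_indep_neg:
  assumes "lin_indep n (ws@[v])" and vv: "\<forall>i. v' i = - v i" shows "lin_indep n (ws@[v'])"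
  unfolding lin_indep_snoc
proof (rule allI, rule impI)
  fix c assume h: "\<forall>j\<le>n. (\<Sum>k<length ws. c k * real_of_int ((ws!k) j)) + c (length ws) * real_of_int (v' j) = 0"
  define c' where "c' = c(length ws := - c (length ws))"
  have e: "(\<Sum>k<length ws. c' k * real_of_int ((ws!k) j)) = (\<Sum>k<length ws. c k * real_of_int ((ws!k) j))" for j
    by (rule sum.cong) (auto simp: c'_def)
  have "\<forall>j\<le>n. (\<Sum>k<length ws. c' k * real_of_int ((ws!k) j)) + c' (length ws) * real_of_int (v j) = 0"
    using h vv by (simp add: e) (simp add: c'_def)
  hence "\<forall>k\<le>length ws. c' k = 0" using assms(1) unfolding lin_indep_snoc by blast
  thus "\<forall>k\<le>length ws. c k = 0" by (auto simp: c'_def split: if_splits)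
qed

lemma lin_indep_nonzero:
  assumes "lin_indep n (ws@[v])" shows "\<exists>j\<le>n. v j \<noteq> 0"
proof (rule ccontr)
  assume "\<not> ?thesis"
  hence z: "\<forall>j\<le>n. v j = 0" by auto
  define c where "c = (\<lambda>k. if k = length ws then 1::real else 0)"
  have "\<forall>j\<le>n. (\<Sum>k<length ws. c k * real_of_int ((ws!k) j)) + c (length ws) * real_of_int (v j) = 0"
    using z by (simp add: c_def)
  hence "\<forall>k\<le>length ws. c k = 0" using assms unfolding lin_indep_snoc by blast
  thus False unfolding c_def by (metis le_refl one_neq_zero)
qed

definition e :: "nat \<Rightarrow> nat \<Rightarrow> int" where "e j = (\<lambda>i. if i = j then 1 else 0)"

definition es :: "nat \<Rightarrow> (nat \<Rightarrow> int) list" where "es n = map e [0..<Suc n]"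

lemma es_len[simp]: "length (es n) = Suc n" by (simp add: es_def)

lemma es_nth: "k < Suc n \<Longrightarrow> es n ! k = e k" by (simp add: es_def del: upt_Suc)

lemma es_indep: "lin_indep n (es n)"
  unfolding lin_indep_def
proof (intro allI impI)
  fix c k assume h: "\<forall>j\<le>n. (\<Sum>k<length (es n). c k * real_of_int ((es n ! k) j)) = 0" and k: "k < length (es n)"
  have "(\<Sum>kk<length (es n). c kk * real_of_int ((es n ! kk) k)) = (\<Sum>kk\<in>{k}. c kk * real_of_int ((es n ! kk) k))"
    by (rule sum.mono_neutral_right) (use k in \<open>auto simp: es_nth e_def\<close>)
  also have "\<dots> = c k" using k by (simp add: es_nth e_def)
  finally show "c k = 0" using h k by simp
qed

lemma es_props: assumes "v \<in> set (es n)" shows "v \<in> zvecs n \<and> sup_norm n (rvec v) \<le> 1"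
proof -
  have "v \<in> e ` {..n}" using assms by (simp add: es_def atLeast0LessThan lessThan_Suc_atMost del: upt_Suc)
  then obtain j where j: "j \<le> n" "v = e j" by blast
  have "v \<in> zvecs n" using j unfolding zvecs_def e_def by auto
  moreover have "\<forall>i\<le>n. \<bar>rvec v i\<bar> \<le> 1" using j unfolding rvec_def e_def by auto
  ultimately show ?thesis by (simp add: sup_norm_le)
qed

lemma step_exists:
  assumes "lin_indep n ws" "length ws \<le> n" "m \<ge> 1"
  shows "\<exists>w. mink_next n \<alpha> m ws w"
proof -
  obtain u where u: "u \<in> set (es n)" "lin_indep n (ws @ [u])"
    using exch[OF assms(1) es_indep] assms(2) by (auto simp: es_def)
  define C where "C = {v \<in> zvecs n. sup_norm n (rvec v) \<le> real m \<and> lin_indep n (ws@[v])}"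
  have "u \<in> C" using u es_props[OF u(1)] assms(3) by (auto simp: C_def)
  have "C \<subseteq> {f. \<forall>x. (x \<in> {..n} \<longrightarrow> f x \<in> {- int m..int m}) \<and> (x \<notin> {..n} \<longrightarrow> f x = 0)}"
  proof
    fix v assume "v \<in> C"
    hence h: "\<forall>i\<le>n. \<bar>real_of_int (v i)\<bar> \<le> real m" "\<forall>i>n. v i = 0"
      by (auto simp: C_def zvecs_def sup_norm_le rvec_def)
    have a: "\<bar>v i\<bar> \<le> int m" if "i \<le> n" for i using h(1) that by fastforce
    have "- int m \<le> v i \<and> v i \<le> int m" if "i \<le> n" for i using a[OF that] by (simp add: abs_le_iff)
    then show "v \<in> {f. \<forall>x. (x \<in> {..n} \<longrightarrow> f x \<in> {- int m..int m}) \<and> (x \<notin> {..n} \<longrightarrow> f x = 0)}"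
      using h(2) by (auto simp: abs_le_iff)
  qed
  hence finC: "finite C" by (rule finite_subset) (intro finite_set_of_finite_funs; simp)
  define f where "f = (\<lambda>v. \<bar>xi n \<alpha> (rvec v)\<bar>)"
  have ne: "f ` C \<noteq> {}" using \<open>u \<in> C\<close> by auto
  obtain v where v: "v \<in> C" "f v = Min (f ` C)" using Min_in[OF _ ne] finC by auto
  have vmin: "\<forall>x\<in>C. f v \<le> f x" using v(2) finC by simp
  have "lin_indep n (ws@[v])" using v(1) by (simp add: C_def)
  then obtain j where j: "j \<le> n" "v j \<noteq> 0" using lin_indep_nonzero by blast
  define j0 where "j0 = (LEAST j. v j \<noteq> 0)"
  have j0a: "v j0 \<noteq> 0" unfolding j0_def by (rule LeastI[of _ j]) (rule j(2))
  have "j0 \<le> j" unfolding j0_def by (rule Least_le) (rule j(2))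
  hence j0b: "j0 \<le> n" using j(1) by simp
  have j0c: "\<forall>i<j0. v i = 0" unfolding j0_def using not_less_Least by blast
  define v' where "v' = (\<lambda>i. - v i)"
  have vC: "v \<in> zvecs n" "sup_norm n (rvec v) \<le> real m" "lin_indep n (ws@[v])"
    using v(1) by (simp_all add: C_def)
  have "v' \<in> zvecs n" using vC(1) by (simp add: zvecs_def v'_def)
  moreover have "sup_norm n (rvec v') = sup_norm n (rvec v)" by (simp add: sup_norm_def rvec_def v'_def)
  moreover have "lin_indep n (ws@[v'])" by (rule lin_indep_neg[OF vC(3)]) (simp add: v'_def)
  ultimately have v'C: "v' \<in> C" using vC(2) by (simp add: C_def)
  have "xi n \<alpha> (rvec v') = - xi n \<alpha> (rvec v)" by (simp add: xi_def v'_def rvec_def sum_negf)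
  hence fv': "f v' = f v" by (simp add: f_def)
  have mnI: "mink_next n \<alpha> m ws x" if "x \<in> C" "first_nonzero_pos n x" "f x = f v" for x
  proof -
    have "\<forall>y \<in> zvecs n. sup_norm n (rvec y) \<le> real m \<longrightarrow> lin_indep n (ws @ [y]) \<longrightarrow>
        \<bar>xi n \<alpha> (rvec x)\<bar> \<le> \<bar>xi n \<alpha> (rvec y)\<bar>"
    proof (intro ballI impI)
      fix y assume "y \<in> zvecs n" "sup_norm n (rvec y) \<le> real m" "lin_indep n (ws @ [y])"
      hence "y \<in> C" by (simp add: C_def)
      hence "f v \<le> f y" using vmin by blast
      thus "\<bar>xi n \<alpha> (rvec x)\<bar> \<le> \<bar>xi n \<alpha> (rvec y)\<bar>" using that(3) by (simp add: f_def)
    qed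
    with that(1,2) show ?thesis unfolding mink_next_def C_def by blast
  qed
  show ?thesis
  proof (cases "v j0 > 0")
    case True
    hence "first_nonzero_pos n v" using j0b j0c unfolding first_nonzero_pos_def by blast
    thus ?thesis using mnI[OF v(1)] by blast
  next
    case False
    hence "v' j0 > 0" using j0a by (simp add: v'_def)
    moreover have "\<forall>i<j0. v' i = 0" using j0c by (simp add: v'_def)
    ultimately have "first_nonzero_pos n v'" using j0b unfolding first_nonzero_pos_def by blast
    thus ?thesis using mnI[OF v'C _ fv'] by blast
  qed
qed

lemma rows_ok:
  assumes "m \<ge> 1" shows "i \<le> n + 1 \<Longrightarrow> length (mink_rows n \<alpha> m i) = i \<and> lin_indep n (mink_rows n \<alpha> m i)"
proof (induction i)
  case 0 then show ?case by (simp add: lin_indep_def)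
next
  case (Suc i)
  let ?ws = "mink_rows n \<alpha> m i"
  have ih: "length ?ws = i" "lin_indep n ?ws" using Suc by auto
  define w where "w = (SOME w. mink_next n \<alpha> m ?ws w)"
  have "\<exists>w. mink_next n \<alpha> m ?ws w"
    using step_exists[OF ih(2) _ assms] ih(1) Suc.prems by simp
  hence "mink_next n \<alpha> m ?ws w" unfolding w_def by (rule someI_ex)
  hence "lin_indep n (?ws @ [w])" unfolding mink_next_def by blast
  moreover have "mink_rows n \<alpha> m (Suc i) = ?ws @ [w]" by (simp add: Let_def w_def)
  ultimately show ?case using ih by simp
qed

theorem lemma5p2:
  fixes n m :: nat and \<alpha> :: "nat \<Rightarrow> real"
  assumes "Q_lin_indep_alpha n \<alpha>"
    and "m \<ge> 1"
  shows "succ_min n (G_norm n \<alpha> m) (n+1) \<ge> real m"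
proof -
  let ?ws = "mink_rows n \<alpha> m n"
  define w where "w = (SOME w. mink_next n \<alpha> m ?ws w)"
  have ws: "length ?ws = n" "lin_indep n ?ws" using rows_ok[OF assms(2), of n n \<alpha>] by auto
  have "\<exists>w. mink_next n \<alpha> m ?ws w"
    using step_exists[OF ws(2) _ assms(2)] ws(1) by simp
  hence mn: "mink_next n \<alpha> m ?ws w" unfolding w_def by (rule someI_ex)
  have r: "mink_rows n \<alpha> m (n+1) = ?ws @ [w]" by (simp add: Let_def w_def)
  have beta: "mink_beta n \<alpha> m (n+1) = xi n \<alpha> (rvec w)"
    unfolding mink_beta_def r using ws(1) by (simp add: nth_append)
  define \<beta> where "\<beta> = xi n \<alpha> (rvec w)"
  have bnz: "\<beta> \<noteq> 0"
  proof
    assume b0: "\<beta> = 0"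
    define q where "q = (\<lambda>i. of_int (w i) :: rat)"
    have "(\<Sum>i<n. of_rat (q i) * \<alpha> i) + of_rat (q n) = 0"
      using b0 by (simp add: \<beta>_def xi_def q_def rvec_def)
    hence "\<forall>i\<le>n. q i = 0" using assms(1) unfolding Q_lin_indep_alpha_def by blast
    moreover obtain j where "j \<le> n" "w j > 0" using mn by (auto simp: mink_next_def first_nonzero_pos_def)
    ultimately show False by (auto simp: q_def)
  qed
  define G where "G = G_norm n \<alpha> m"
  have Gb: "sup_norm n x \<le> G x" "real m / \<bar>\<beta>\<bar> * \<bar>xi n \<alpha> x\<bar> \<le> G x" for x
    using beta by (simp_all add: G_def G_norm_def \<beta>_def)
  define S where "S = {\<mu>. \<mu> > 0 \<and> (\<exists>vs. length vs = n+1 \<and> set vs \<subseteq> zvecs n \<and> lin_indep n vs \<and>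
                                     (\<forall>v\<in>set vs. G (rvec v) \<le> \<mu>))}"
  define M where "M = Max (insert 1 ((\<lambda>v. G (rvec v)) ` set (es n)))"
  have fin: "finite (insert 1 ((\<lambda>v. G (rvec v)) ` set (es n)))" by simp
  have M1: "1 \<le> M" unfolding M_def by (rule Max_ge[OF fin]) simp
  have MG: "\<forall>v\<in>set (es n). G (rvec v) \<le> M" unfolding M_def using fin by (auto intro: Max_ge)
  have sz: "set (es n) \<subseteq> zvecs n" using es_props by blast
  have "M \<in> S" unfolding S_def mem_Collect_eq
  proof (intro conjI exI[of _ "es n"])
    show "0 < M" using M1 by simp
  qed (use MG es_indep sz in auto)
  hence Sne: "S \<noteq> {}" by blast
  have low: "real m \<le> \<mu>" if mu: "\<mu> \<in> S" for \<mu>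
  proof (rule ccontr)
    assume "\<not> real m \<le> \<mu>"
    hence lt: "\<mu> < real m" by simp
    obtain vs where vs: "length vs = n+1" "set vs \<subseteq> zvecs n" "lin_indep n vs" "\<forall>v\<in>set vs. G (rvec v) \<le> \<mu>"
      using mu by (auto simp: S_def)
    obtain u where u: "u \<in> set vs" "lin_indep n (?ws @ [u])" using exch[OF ws(2) vs(3)] ws(1) vs(1) by auto
    have "sup_norm n (rvec u) \<le> real m" using Gb(1)[of "rvec u"] vs(4) u(1) lt by force
    hence "\<bar>\<beta>\<bar> \<le> \<bar>xi n \<alpha> (rvec u)\<bar>" using mn u vs(2) by (auto simp: mink_next_def \<beta>_def)
    moreover have "real m / \<bar>\<beta>\<bar> * \<bar>xi n \<alpha> (rvec u)\<bar> < real m"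
      using Gb(2)[of "rvec u"] vs(4) u(1) lt by force
    ultimately show False using bnz assms(2)
      by (simp add: field_simps)
  qed
  have "succ_min n (G_norm n \<alpha> m) (n+1) = Inf S" by (simp add: succ_min_def S_def G_def)
  also have "real m \<le> Inf S" using Sne low by (intro cInf_greatest) auto
  finally show ?thesis by simp
qed

end
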